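(* Let $M$ be a Coxeter diagram over $I$ with no subdiagram of type $\mathsf{A}_3$ and let $\Gamma=(V,\tau,* )$ be a geometry over $I$ satisfying Properties (F), (P) and (D). Let $X$ be a flag of $\Gamma$ (possibly empty) and $i\in I\setminus\tau(X)$. Form $\Gamma'=(V\cup\{x\},\tau,* )$ by adding a single new element $x$ of type $i$, incident exactly with the elements of $X$ and with all elements $v\in V$ whose type is different from $i$ and not adjacent to $i$ in $M$ (incidences among elements of $V$ unchanged). Then $\Gamma'$ satisfies Properties (F), (P) and (D), and $X\cup\{x\}$ is a flag of $\Gamma'$.
   Context: A geometry over $I$ is a triple $(V,\tau,* )$ with $\tau:V\to I$ and $*$ a symmetric relation such that elements of equal type are incident iff equal. A flag is a set of pairwise incident elements; the residue of a flag $X$ is the geometry formed by the elements outside $X$ incident with all of $X$. Coxeter diagram $M$ with matrix $(m_{i,j})$; nodes $i\ne j$ are adjacent iff $m_{i,j}\ge3$; a subdiagram of type $\mathsf{A}_3$ is three nodes $i,j,k$ with $m_{i,j}=m_{j,k}=3$, $m_{i,k}=2$. A rank 2 geometry (bipartite incidence graph) is without $k$-gons if it has no cycle of length $2k$. (F) Elements of distinct non-adjacent types are always incident. (P) For adjacent nodes $i,j$ and any flag $X$ of type $J$ with $i,j\notin J$ containing a vertex of every node of $I\setminus\{i,j\}$ adjacent to $i$ or $j$, the restriction of the residue of $X$ to types $i,j$ has no $t$-gons for $t<m_{i,j}$. (D) If $m_{i,j}\ge4$, the restriction of the geometry to types $i$ and $j$ has no digons. *)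

theory Defs
  imports Main "HOL-Library.Extended_Nat"
begin

definition coxeter_diagram :: "'i set \<Rightarrow> ('i \<Rightarrow> 'i \<Rightarrow> enat) \<Rightarrow> bool" where
  "coxeter_diagram I m \<longleftrightarrow>
     (\<forall>i\<in>I. m i i = 1) \<and>
     (\<forall>i\<in>I. \<forall>j\<in>I. m i j = m j i) \<and>
     (\<forall>i\<in>I. \<forall>j\<in>I. i \<noteq> j \<longrightarrow> m i j \<ge> 2)"

definition adjacent :: "('i \<Rightarrow> 'i \<Rightarrow> enat) \<Rightarrow> 'i \<Rightarrow> 'i \<Rightarrow> bool" where
  "adjacent m i j \<longleftrightarrow> i \<noteq> j \<and> m i j \<ge> 3"

definition has_A3_subdiagram :: "'i set \<Rightarrow> ('i \<Rightarrow> 'i \<Rightarrow> enat) \<Rightarrow> bool" where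
  "has_A3_subdiagram I m \<longleftrightarrow>
     (\<exists>i\<in>I. \<exists>j\<in>I. \<exists>k\<in>I. m i j = 3 \<and> m j k = 3 \<and> m i k = 2)"

definition geometry :: "'i set \<Rightarrow> 'a set \<Rightarrow> ('a \<Rightarrow> 'i) \<Rightarrow> ('a \<Rightarrow> 'a \<Rightarrow> bool) \<Rightarrow> bool" where
  "geometry I V tau inc \<longleftrightarrow>
     (\<forall>v\<in>V. tau v \<in> I) \<and>
     (\<forall>u\<in>V. \<forall>v\<in>V. inc u v = inc v u) \<and>
     (\<forall>u\<in>V. \<forall>v\<in>V. tau u = tau v \<longrightarrow> (inc u v \<longleftrightarrow> u = v))"

definition flag :: "'a set \<Rightarrow> ('a \<Rightarrow> 'a \<Rightarrow> bool) \<Rightarrow> 'a set \<Rightarrow> bool" where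
  "flag V inc X \<longleftrightarrow> X \<subseteq> V \<and> (\<forall>u\<in>X. \<forall>v\<in>X. inc u v)"

definition residue :: "'a set \<Rightarrow> ('a \<Rightarrow> 'a \<Rightarrow> bool) \<Rightarrow> 'a set \<Rightarrow> 'a set" where
  "residue V inc X = {v \<in> V. v \<notin> X \<and> (\<forall>y\<in>X. inc v y)}"

definition restrict_types :: "('a \<Rightarrow> 'i) \<Rightarrow> 'a set \<Rightarrow> 'i set \<Rightarrow> 'a set" where
  "restrict_types tau W J = {v \<in> W. tau v \<in> J}"

definition has_gon :: "('a \<Rightarrow> 'a \<Rightarrow> bool) \<Rightarrow> 'a set \<Rightarrow> nat \<Rightarrow> bool" where
  "has_gon inc W k \<longleftrightarrow> k \<ge> 2 \<and>
     (\<exists>c :: nat \<Rightarrow> 'a. inj_on c {..<2*k} \<and> c ` {..<2*k} \<subseteq> W \<and>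
        (\<forall>n<2*k. inc (c n) (c (Suc n mod (2*k)))))"

definition prop_F :: "('i \<Rightarrow> 'i \<Rightarrow> enat) \<Rightarrow> 'a set \<Rightarrow> ('a \<Rightarrow> 'i) \<Rightarrow> ('a \<Rightarrow> 'a \<Rightarrow> bool) \<Rightarrow> bool" where
  "prop_F m V tau inc \<longleftrightarrow>
     (\<forall>u\<in>V. \<forall>v\<in>V. tau u \<noteq> tau v \<and> \<not> adjacent m (tau u) (tau v) \<longrightarrow> inc u v)"

definition prop_P :: "'i set \<Rightarrow> ('i \<Rightarrow> 'i \<Rightarrow> enat) \<Rightarrow> 'a set \<Rightarrow> ('a \<Rightarrow> 'i) \<Rightarrow> ('a \<Rightarrow> 'a \<Rightarrow> bool) \<Rightarrow> bool" where
  "prop_P I m V tau inc \<longleftrightarrow>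
     (\<forall>i\<in>I. \<forall>j\<in>I. \<forall>X. adjacent m i j \<and> flag V inc X \<and>
        i \<notin> tau ` X \<and> j \<notin> tau ` X \<and>
        (\<forall>k\<in>I - {i, j}. adjacent m i k \<or> adjacent m j k \<longrightarrow> (\<exists>y\<in>X. tau y = k)) \<longrightarrow>
        (\<forall>t::nat. 2 \<le> t \<and> enat t < m i j \<longrightarrow>
           \<not> has_gon inc (restrict_types tau (residue V inc X) {i, j}) t))"

definition prop_D :: "'i set \<Rightarrow> ('i \<Rightarrow> 'i \<Rightarrow> enat) \<Rightarrow> 'a set \<Rightarrow> ('a \<Rightarrow> 'i) \<Rightarrow> ('a \<Rightarrow> 'a \<Rightarrow> bool) \<Rightarrow> bool" where
  "prop_D I m V tau inc \<longleftrightarrow>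
     (\<forall>i\<in>I. \<forall>j\<in>I. m i j \<ge> 4 \<longrightarrow> \<not> has_gon inc (restrict_types tau V {i, j}) 2)"

definition ext_inc :: "('i \<Rightarrow> 'i \<Rightarrow> enat) \<Rightarrow> ('a \<Rightarrow> 'i) \<Rightarrow> ('a \<Rightarrow> 'a \<Rightarrow> bool) \<Rightarrow> 'a set \<Rightarrow> 'i \<Rightarrow> 'a \<Rightarrow> 'a \<Rightarrow> 'a \<Rightarrow> bool" where
  "ext_inc m tau inc X i x u v =
     (if u = x \<and> v = x then True
      else if u = x then (v \<in> X \<or> (tau v \<noteq> i \<and> \<not> adjacent m i (tau v)))
      else if v = x then (u \<in> X \<or> (tau u \<noteq> i \<and> \<not> adjacent m i (tau u)))
      else inc u v)"

end

theory Submission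
  imports Defs
begin

lemma nbrs:
  assumes "k \<ge> (2::nat)" "\<forall>n<2*k. R (c n) (c (Suc n mod (2*k)))" "n < 2*k"
  shows "\<exists>p s. p < 2*k \<and> s < 2*k \<and> p \<noteq> s \<and> p \<noteq> n \<and> s \<noteq> n \<and> R (c p) (c n) \<and> R (c n) (c s)"
proof (cases "n = 0")
  case True
  have "2*k-1 < 2*k" using assms by simp
  hence "R (c (2*k-1)) (c (Suc (2*k-1) mod (2*k)))" using assms(2) by blast
  moreover have "Suc (2*k-1) mod (2*k) = 0" using assms by simp
  moreover have "R (c 0) (c (Suc 0 mod (2*k)))" using assms(2) assms(3) True by blast
  moreover have "Suc 0 mod (2*k) = 1" using assms by simp
  ultimately show ?thesis using True assms by (rule_tac x="2*k-1" in exI, rule_tac x=1 in exI) auto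
next
  case False
  have "n-1 < 2*k" using assms by simp
  hence "R (c (n-1)) (c (Suc (n-1) mod (2*k)))" using assms(2) by blast
  moreover have "Suc (n-1) mod (2*k) = n" using assms False by simp
  moreover have "R (c n) (c (Suc n mod (2*k)))" using assms(2,3) by blast
  moreover have "Suc n mod (2*k) < 2*k" using assms by simp
  moreover have "Suc n mod (2*k) \<noteq> n - 1 \<and> Suc n mod (2*k) \<noteq> n"
    using assms False by (cases "Suc n = 2*k") (auto simp: mod_Suc)
  ultimately show ?thesis using False assms by (rule_tac x="n-1" in exI, rule_tac x="Suc n mod (2*k)" in exI) auto
qed

lemma adj_sym: "coxeter_diagram I m \<Longrightarrow> a \<in> I \<Longrightarrow> b \<in> I \<Longrightarrow> adjacent m a b = adjacent m b a"
  by (auto simp: coxeter_diagram_def adjacent_def)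

lemma geo_ext:
  assumes "geometry I V tau inc" "flag V inc X" "i \<in> I" "i \<notin> tau ` X" "x \<notin> V"
  shows "geometry I (V \<union> {x}) (tau(x := i)) (ext_inc m tau inc X i x)"
  using assms unfolding geometry_def flag_def ext_inc_def by (auto; fastforce)

theorem mainTheorem2:
  fixes I :: "'i set" and m :: "'i \<Rightarrow> 'i \<Rightarrow> enat"
    and V :: "'a set" and tau :: "'a \<Rightarrow> 'i" and inc :: "'a \<Rightarrow> 'a \<Rightarrow> bool"
    and X :: "'a set" and i :: 'i and x :: 'a
  assumes "coxeter_diagram I m"
    and "\<not> has_A3_subdiagram I m"
    and "geometry I V tau inc"
    and "prop_F m V tau inc" and "prop_P I m V tau inc" and "prop_D I m V tau inc"
    and "flag V inc X"
    and "i \<in> I" and "i \<notin> tau ` X"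
    and "x \<notin> V"
  shows "geometry I (V \<union> {x}) (tau(x := i)) (ext_inc m tau inc X i x)
       \<and> prop_F m (V \<union> {x}) (tau(x := i)) (ext_inc m tau inc X i x)
       \<and> prop_P I m (V \<union> {x}) (tau(x := i)) (ext_inc m tau inc X i x)
       \<and> prop_D I m (V \<union> {x}) (tau(x := i)) (ext_inc m tau inc X i x)
       \<and> flag (V \<union> {x}) (ext_inc m tau inc X i x) (X \<union> {x})"
proof -
  note cox = assms(1) and geo = assms(3) and fl = assms(7)
  define tau' where "tau' = tau(x := i)"
  define inc' where "inc' = ext_inc m tau inc X i x"
  have G: "geometry I (V \<union> {x}) tau' inc'"
    unfolding tau'_def inc'_def using geo_ext assms by metis
  have XV: "X \<subseteq> V" using fl by (simp add: flag_def)
  have incV: "\<And>u v. u \<in> V \<Longrightarrow> v \<in> V \<Longrightarrow> inc' u v = inc u v"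
    using assms(10) by (auto simp: inc'_def ext_inc_def)
  have tauV: "\<And>u. u \<in> V \<Longrightarrow> tau' u = tau u" using assms(10) by (auto simp: tau'_def)
  have incx: "v \<in> X" if "v \<in> V" "inc' v x" "adjacent m i (tau v)" for v
  proof -
    have "v \<noteq> x" using that assms(10) by auto
    thus ?thesis using that by (simp add: inc'_def ext_inc_def)
  qed
  have incx2: "v \<in> X" if "v \<in> V" "inc' x v" "adjacent m i (tau v)" for v
  proof -
    have "v \<noteq> x" using that assms(10) by auto
    thus ?thesis using that by (simp add: inc'_def ext_inc_def)
  qed
  have Xsame: "\<And>u v. u \<in> X \<Longrightarrow> v \<in> X \<Longrightarrow> tau u = tau v \<Longrightarrow> u = v"
    using fl geo XV unfolding flag_def geometry_def by blast
  have tauI: "\<And>u. u \<in> V \<union> {x} \<Longrightarrow> tau' u \<in> I" using G unfolding geometry_def by blast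
  have sametype: "\<And>u v. u \<in> V \<union> {x} \<Longrightarrow> v \<in> V \<union> {x} \<Longrightarrow> tau' u = tau' v \<Longrightarrow> inc' u v \<Longrightarrow> u = v"
    using G unfolding geometry_def by blast
  have taux: "tau' x = i" by (simp add: tau'_def)
  have xcyc: "False" if ab: "a \<in> I" "b \<in> I" "adjacent m a b" and k2: "k \<ge> 2"
     and cinj: "inj_on c {..<2*k}" and cW: "c ` {..<2*k} \<subseteq> restrict_types tau' (V \<union> {x}) {a,b}"
     and cinc: "\<forall>n<2*k. inc' (c n) (c (Suc n mod (2*k)))" and xin: "x \<in> c ` {..<2*k}" for a b k c
  proof -
    obtain n where n: "n < 2*k" "c n = x" using xin by auto
    obtain p s where ps: "p < 2*k" "s < 2*k" "p \<noteq> s" "p \<noteq> n" "s \<noteq> n" "inc' (c p) (c n)" "inc' (c n) (c s)"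
      using nbrs[of k inc' c n, OF k2 cinc n(1)] by blast
    have ne: "c p \<noteq> x" "c s \<noteq> x" "c p \<noteq> c s" using cinj ps n unfolding inj_on_def by (metis lessThan_iff)+
    have mem: "c p \<in> V" "c s \<in> V" "tau' (c p) \<in> {a,b}" "tau' (c s) \<in> {a,b}"
      using cW ps ne unfolding restrict_types_def by auto
    have xab: "i \<in> {a,b}" using cW n unfolding restrict_types_def taux[symmetric] by auto
    have "tau' (c p) \<noteq> i" using sametype[of "c p" x] mem ne ps n taux by auto
    moreover have "tau' (c s) \<noteq> i" using sametype[of x "c s"] mem ne ps n taux by auto
    ultimately have tt: "tau (c p) = tau (c s)" "adjacent m i (tau (c p))"
      using mem xab ab adj_sym[OF cox, of a b] tauV by auto
    have "c p \<in> X" using incx[of "c p"] mem ps n tt by auto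
    moreover have "c s \<in> X" using incx2[of "c s"] mem ps n tt by auto
    ultimately show False using Xsame tt ne by blast
  qed
  have F: "prop_F m (V \<union> {x}) tau' inc'"
  proof -
    { fix u v assume u: "u \<in> V \<union> {x}" and v: "v \<in> V \<union> {x}" and ne: "tau' u \<noteq> tau' v"
        and na: "\<not> adjacent m (tau' u) (tau' v)"
      have "inc' u v"
      proof (cases "u = x")
        case True
        hence "v \<noteq> x" "v \<in> V" using ne v by auto
        thus ?thesis using True ne na tauV by (auto simp: inc'_def ext_inc_def tau'_def)
      next
        case False
        note uf = False
        show ?thesis
        proof (cases "v = x")
          case True
          have "u \<in> V" using u uf by auto
          hence "\<not> adjacent m i (tau u)" using na True adj_sym[OF cox, of i "tau u"] assms(8) geo uf
            by (auto simp: tau'_def geometry_def)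
          thus ?thesis using True uf ne by (auto simp: inc'_def ext_inc_def tau'_def)
        next
          case False
          hence "u \<in> V" "v \<in> V" using u v uf by auto
          thus ?thesis using assms(4) ne na incV tauV unfolding prop_F_def by auto
        qed
      qed }
    thus ?thesis unfolding prop_F_def by blast
  qed
  have D: "prop_D I m (V \<union> {x}) tau' inc'"
    unfolding prop_D_def
  proof (intro ballI impI notI)
    fix a b assume a: "a \<in> I" and b: "b \<in> I" and m4: "4 \<le> m a b"
      and g: "has_gon inc' (restrict_types tau' (V \<union> {x}) {a, b}) 2"
    have "a \<noteq> b" using cox a m4 unfolding coxeter_diagram_def by (auto simp add: one_enat_def numeral_eq_enat)
    moreover have "3 \<le> m a b" using m4 by (rule order_trans[rotated]) (simp add: numeral_eq_enat)
    ultimately have adj: "adjacent m a b" unfolding adjacent_def by simp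
    obtain c where c: "inj_on c {..<2*2}" "c ` {..<2*2} \<subseteq> restrict_types tau' (V \<union> {x}) {a, b}"
      "\<forall>n<2*2. inc' (c n) (c (Suc n mod (2*2)))" using g unfolding has_gon_def by blast
    show False
    proof (cases "x \<in> c ` {..<2*2}")
      case True
      show False using xcyc[OF a b adj _ c True] by simp
    next
      case False
      have "c ` {..<2*2} \<subseteq> restrict_types tau V {a, b}"
        using c(2) False tauV unfolding restrict_types_def by force
      moreover have "\<forall>n<2*2. inc (c n) (c (Suc n mod (2*2)))"
      proof (intro allI impI)
        fix n :: nat assume "n < 2*2"
        moreover have "Suc n mod (2*2) < 2*2" by simp
        moreover have "\<And>j. j < 2*2 \<Longrightarrow> c j \<in> V" using c(2) False unfolding restrict_types_def by auto
        ultimately show "inc (c n) (c (Suc n mod (2*2)))"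
          using c(3) incV by metis
      qed
      ultimately have "has_gon inc (restrict_types tau V {a, b}) 2" using c(1) unfolding has_gon_def by auto
      thus False using assms(6) a b m4 unfolding prop_D_def by blast
    qed
  qed
  have P: "prop_P I m (V \<union> {x}) tau' inc'"
    unfolding prop_P_def
  proof (intro ballI allI impI notI)
    fix a b Y t
    assume a: "a \<in> I" and b: "b \<in> I"
      and H: "adjacent m a b \<and> flag (V \<union> {x}) inc' Y \<and> a \<notin> tau' ` Y \<and> b \<notin> tau' ` Y \<and>
        (\<forall>k\<in>I - {a, b}. adjacent m a k \<or> adjacent m b k \<longrightarrow> (\<exists>y\<in>Y. tau' y = k))"
      and T: "2 \<le> t \<and> enat t < m a b"
      and g: "has_gon inc' (restrict_types tau' (residue (V \<union> {x}) inc' Y) {a, b}) t"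
    have adj: "adjacent m a b" and flY: "flag (V \<union> {x}) inc' Y" and aY: "a \<notin> tau' ` Y" and bY: "b \<notin> tau' ` Y"
      and cov: "\<forall>k\<in>I - {a, b}. adjacent m a k \<or> adjacent m b k \<longrightarrow> (\<exists>y\<in>Y. tau' y = k)" using H by auto
    have t2: "2 \<le> t" using T by auto
    obtain c where c: "inj_on c {..<2*t}" "c ` {..<2*t} \<subseteq> restrict_types tau' (residue (V \<union> {x}) inc' Y) {a, b}"
      "\<forall>n<2*t. inc' (c n) (c (Suc n mod (2*t)))" using g unfolding has_gon_def by blast
    have cW: "c ` {..<2*t} \<subseteq> restrict_types tau' (V \<union> {x}) {a, b}"
      using c(2) unfolding restrict_types_def residue_def by auto
    have xnot: "x \<notin> c ` {..<2*t}"
      using xcyc[OF a b adj t2 c(1) cW c(3)] by blast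
    have cj: "c j \<in> V" "c j \<notin> Y" "\<forall>y\<in>Y. inc' (c j) y" "tau (c j) \<in> {a,b}" if "j < 2*t" for j
      using that c(2) xnot tauV unfolding restrict_types_def residue_def by force+
    define Y' where "Y' = Y - {x}"
    have noadj: "\<not> adjacent m i a \<and> \<not> adjacent m i b" if xY: "x \<in> Y"
    proof -
      have lt: "0 < 2*t" "1 < 2*t" "2 < 2*t" "3 < 2*t" using t2 by auto
      have s: "Suc 0 mod (2*t) = 1" "Suc 1 mod (2*t) = 2" "Suc 2 mod (2*t) = 3" using lt by auto
      have i01: "inc' (c 0) (c 1)" "inc' (c 1) (c 2)" "inc' (c 2) (c 3)"
        using c(3) lt s by (metis One_nat_def numeral_2_eq_2 numeral_3_eq_3)+
      have d: "c 0 \<noteq> c 1" "c 1 \<noteq> c 2" "c 2 \<noteq> c 3" "c 0 \<noteq> c 2" "c 1 \<noteq> c 3"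
        using c(1) lt unfolding inj_on_def by (metis lessThan_iff zero_neq_one numeral_One numeral_eq_iff semiring_norm(83,84,85,88,89) zero_neq_numeral)+
      have "tau (c 0) \<noteq> tau (c 1)" using sametype[of "c 0" "c 1"] cj[OF lt(1)] cj[OF lt(2)] tauV i01 d by auto
      moreover have "tau (c 1) \<noteq> tau (c 2)" using sametype[of "c 1" "c 2"] cj[OF lt(2)] cj[OF lt(3)] tauV i01 d by auto
      moreover have "tau (c 2) \<noteq> tau (c 3)" using sametype[of "c 2" "c 3"] cj[OF lt(3)] cj[OF lt(4)] tauV i01 d by auto
      ultimately have ty: "tau (c 0) = tau (c 2)" "tau (c 1) = tau (c 3)" "{tau (c 0), tau (c 1)} = {a,b}"
        using cj[OF lt(1)] cj[OF lt(2)] cj[OF lt(3)] cj[OF lt(4)] by auto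
      have inx: "inc' (c j) x" if "j < 2*t" for j using cj[OF that] xY by blast
      have "\<not> adjacent m i (tau (c 0))"
      proof
        assume "adjacent m i (tau (c 0))"
        hence "c 0 \<in> X" "c 2 \<in> X" using incx inx cj lt ty by metis+
        thus False using Xsame ty d by blast
      qed
      moreover have "\<not> adjacent m i (tau (c 1))"
      proof
        assume "adjacent m i (tau (c 1))"
        hence "c 1 \<in> X" "c 3 \<in> X" using incx inx cj lt ty by metis+
        thus False using Xsame ty d by blast
      qed
      ultimately show ?thesis using ty(3) by (metis doubleton_eq_iff)
    qed
    have Y'V: "Y' \<subseteq> V" using flY unfolding Y'_def flag_def by auto
    have fY': "flag V inc Y'" unfolding flag_def
    proof (intro conjI ballI)
      show "Y' \<subseteq> V" by (rule Y'V)
      fix u v assume "u \<in> Y'" "v \<in> Y'"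
      moreover hence "u \<in> V" "v \<in> V" "u \<in> Y" "v \<in> Y" using Y'V unfolding Y'_def by auto
      ultimately show "inc u v" using flY incV unfolding flag_def by metis
    qed
    have aY': "a \<notin> tau ` Y'" "b \<notin> tau ` Y'" using aY bY tauV Y'V unfolding Y'_def by (auto simp: image_iff) (metis DiffI empty_iff insert_iff subsetD)+
    have cov': "\<forall>k\<in>I - {a, b}. adjacent m a k \<or> adjacent m b k \<longrightarrow> (\<exists>y\<in>Y'. tau y = k)"
    proof (intro ballI impI)
      fix k assume k: "k \<in> I - {a,b}" and ak: "adjacent m a k \<or> adjacent m b k"
      obtain y where y: "y \<in> Y" "tau' y = k" using cov k ak by blast
      show "\<exists>y\<in>Y'. tau y = k"
      proof (cases "y = x")
        case True
        hence "k = i" "x \<in> Y" using y taux by auto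
        hence False using noadj ak adj_sym[OF cox a assms(8)] adj_sym[OF cox b assms(8)] by auto
        thus ?thesis ..
      next
        case False
        hence "y \<in> Y'" "y \<in> V" using y Y'V unfolding Y'_def by auto
        thus ?thesis using y tauV by metis
      qed
    qed
    have "c ` {..<2*t} \<subseteq> restrict_types tau (residue V inc Y') {a, b}"
    proof
      fix z assume "z \<in> c ` {..<2*t}"
      then obtain j where j: "j < 2*t" "z = c j" by auto
      have "\<forall>y\<in>Y'. inc z y" using cj[OF j(1)] j Y'V incV unfolding Y'_def by auto
      thus "z \<in> restrict_types tau (residue V inc Y') {a, b}"
        using cj[OF j(1)] j unfolding restrict_types_def residue_def Y'_def by auto
    qed
    moreover have "\<forall>n<2*t. inc (c n) (c (Suc n mod (2*t)))"
    proof (intro allI impI)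
      fix n :: nat assume n: "n < 2*t"
      moreover have "Suc n mod (2*t) < 2*t" using n by simp
      ultimately show "inc (c n) (c (Suc n mod (2*t)))"
        using c(3) incV cj by metis
    qed
    ultimately have "has_gon inc (restrict_types tau (residue V inc Y') {a, b}) t"
      using c(1) t2 unfolding has_gon_def by auto
    thus False using assms(5) a b adj fY' aY' cov' T unfolding prop_P_def by blast
  qed
  have FL: "flag (V \<union> {x}) inc' (X \<union> {x})"
    using fl assms(10) XV by (auto simp: flag_def inc'_def ext_inc_def)
  show ?thesis using G F D P FL unfolding tau'_def inc'_def by blast
qed

end
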